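(* There exists $c>0$ such that for every positive integer $t$ there is $\alpha=\alpha(t)>0$ with the following property: every quasi-comparability graph of complexity $t$ on $n$ vertices contains a clique or an independent set of size at least $\alpha n^{c}$.
   Context: For $\mathbf{x},\mathbf{y}\in\mathbb{R}^t$ write $\mathbf{x}\prec\mathbf{y}$ if $\mathbf{x}(i)<\mathbf{y}(i)$ for every $i\in[t]$. A quasi-comparability graph of complexity $t$ is a finite simple graph $G$ with $V(G)\subset\mathbb{R}^t\times\mathbb{R}^t$ in which distinct vertices $(\mathbf{x},\mathbf{y})$ and $(\mathbf{x}',\mathbf{y}')$ are adjacent iff $\mathbf{x}\prec\mathbf{y}'$ or $\mathbf{x}'\prec\mathbf{y}$. *)

theory Defs
  imports Complex_Main
begin

text \<open>Vectors in R^t are represented as real lists of length t.\<close>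

definition vec_prec :: "nat \<Rightarrow> real list \<Rightarrow> real list \<Rightarrow> bool" where
  "vec_prec t x y \<longleftrightarrow> (\<forall>i<t. x ! i < y ! i)"

definition qc_points :: "nat \<Rightarrow> (real list \<times> real list) set" where
  "qc_points t = {(x, y). length x = t \<and> length y = t}"

definition qc_adj :: "nat \<Rightarrow> real list \<times> real list \<Rightarrow> real list \<times> real list \<Rightarrow> bool" where
  "qc_adj t u v \<longleftrightarrow> u \<noteq> v \<and> (vec_prec t (fst u) (snd v) \<or> vec_prec t (fst v) (snd u))"

text \<open>A quasi-comparability graph of complexity t is determined by its finite vertex set
  V \<subseteq> R^t \<times> R^t; its edges are given by qc_adj.\<close>
definition qc_graph :: "nat \<Rightarrow> (real list \<times> real list) set \<Rightarrow> bool" where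
  "qc_graph t V \<longleftrightarrow> finite V \<and> V \<subseteq> qc_points t"

definition qc_clique :: "nat \<Rightarrow> (real list \<times> real list) set \<Rightarrow> bool" where
  "qc_clique t S \<longleftrightarrow> (\<forall>u\<in>S. \<forall>v\<in>S. u \<noteq> v \<longrightarrow> qc_adj t u v)"

definition qc_indep :: "nat \<Rightarrow> (real list \<times> real list) set \<Rightarrow> bool" where
  "qc_indep t S \<longleftrightarrow> (\<forall>u\<in>S. \<forall>v\<in>S. \<not> qc_adj t u v)"

end

theory Submission
  imports Defs
begin


definition transR :: "'a set \<Rightarrow> ('a \<Rightarrow> real) \<Rightarrow> ('a \<Rightarrow> real) \<Rightarrow> bool" where
  "transR W x y \<longleftrightarrow> (\<forall>a\<in>W. \<forall>b\<in>W. \<forall>c\<in>W. x a < y b \<longrightarrow> x b < y c \<longrightarrow> x a < y c)"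

lemma transR_mono: "transR W x y \<Longrightarrow> W' \<subseteq> W \<Longrightarrow> transR W' x y"
  unfolding transR_def by blast

lemma ex_max_fun:
  fixes f :: "'a \<Rightarrow> 'b::linorder"
  shows "finite S \<Longrightarrow> S \<noteq> {} \<Longrightarrow> \<exists>x\<in>S. \<forall>y\<in>S. f y \<le> f x"
proof (induction S rule: finite_ne_induct)
  case (singleton x) thus ?case by simp
next
  case (insert x F)
  then obtain m where m: "m \<in> F" "\<forall>y\<in>F. f y \<le> f m" by blast
  show ?case
  proof (cases "f m \<le> f x")
    case True thus ?thesis using m by (metis insert_iff order.trans order_refl)
  next
    case False thus ?thesis using m by (intro bexI[of _ m]) auto
  qed
qed

lemma median_exists:
  fixes x :: "'a \<Rightarrow> real"
  assumes fin: "finite W" and ne: "W \<noteq> {}"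
  shows "\<exists>p. 2 * card {u\<in>W. x u < p} \<le> card W \<and> 2 * card {u\<in>W. p < x u} \<le> card W"
proof -
  define Q where "Q = {w\<in>W. card W \<le> 2 * card {u\<in>W. x u \<le> x w}}"
  obtain w0 where w0: "w0 \<in> W" "\<forall>u\<in>W. x u \<le> x w0"
    using ex_max_fun[OF fin ne, of x] by blast
  have "{u\<in>W. x u \<le> x w0} = W" using w0 by auto
  hence "w0 \<in> Q" using w0 unfolding Q_def by auto
  have finQ: "finite Q" using fin unfolding Q_def by auto
  obtain wp where wp: "wp \<in> Q" "\<forall>w\<in>Q. x wp \<le> x w"
    using ex_max_fun[OF finQ, of "\<lambda>w. - x w"] \<open>w0 \<in> Q\<close> by auto
  define p where "p = x wp"
  have h1: "card W \<le> 2 * card {u\<in>W. x u \<le> p}" using wp unfolding Q_def p_def by auto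
  have un: "{u\<in>W. x u \<le> p} \<union> {u\<in>W. p < x u} = W" by auto
  have "card ({u\<in>W. x u \<le> p} \<union> {u\<in>W. p < x u}) = card {u\<in>W. x u \<le> p} + card {u\<in>W. p < x u}"
    by (rule card_Un_disjoint) (use fin in auto)
  hence "card {u\<in>W. x u \<le> p} + card {u\<in>W. p < x u} = card W" using un by simp
  hence h2: "2 * card {u\<in>W. p < x u} \<le> card W" using h1 by linarith
  have h3: "2 * card {u\<in>W. x u < p} \<le> card W"
  proof (rule ccontr)
    assume a: "\<not> ?thesis"
    hence ne2: "{u\<in>W. x u < p} \<noteq> {}" by (metis card.empty mult_0_right zero_le)
    have fin2: "finite {u\<in>W. x u < p}" using fin by auto
    obtain w where w: "w \<in> {u\<in>W. x u < p}" "\<forall>u\<in>{u\<in>W. x u < p}. x u \<le> x w"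
      using ex_max_fun[OF fin2 ne2, of x] by blast
    have "{u\<in>W. x u < p} \<subseteq> {u\<in>W. x u \<le> x w}" using w by auto
    hence "card {u\<in>W. x u < p} \<le> card {u\<in>W. x u \<le> x w}" using fin by (intro card_mono) auto
    hence "w \<in> Q" using a w unfolding Q_def by auto
    hence "p \<le> x w" using wp unfolding p_def by auto
    thus False using w by auto
  qed
  show ?thesis using h2 h3 by blast
qed


lemma interval_lemma:
  fixes x y :: "'a \<Rightarrow> real"
  shows "\<forall>W. finite W \<longrightarrow> card W \<le> 2 ^ k \<longrightarrow> (\<forall>u\<in>W. x u < y u) \<longrightarrow>
     (\<exists>W'\<subseteq>W. card W \<le> (k + 1) * card W' \<and> transR W' x y)"
proof (induction k)
  case 0
  show ?case
  proof (intro allI impI)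
    fix W :: "'a set" assume "finite W" "card W \<le> 2 ^ 0" "\<forall>u\<in>W. x u < y u"
    hence "card W \<le> Suc 0" by simp
    hence "\<forall>a1\<in>W. \<forall>a2\<in>W. a1 = a2" using card_le_Suc0_iff_eq \<open>finite W\<close> by blast
    hence "transR W x y" unfolding transR_def by (metis)
    thus "\<exists>W'\<subseteq>W. card W \<le> (0 + 1) * card W' \<and> transR W' x y" by auto
  qed
next
  case (Suc k)
  show ?case
  proof (intro allI impI)
    fix W :: "'a set" assume fin: "finite W" and cW: "card W \<le> 2 ^ Suc k" and pos: "\<forall>u\<in>W. x u < y u"
    show "\<exists>W'\<subseteq>W. card W \<le> (Suc k + 1) * card W' \<and> transR W' x y"
    proof (cases "W = {}")
      case True thus ?thesis unfolding transR_def by auto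
    next
      case False
      then obtain p where p: "2 * card {u\<in>W. x u < p} \<le> card W" "2 * card {u\<in>W. p < x u} \<le> card W"
        using median_exists[OF fin] by blast
      define S where "S = {u\<in>W. x u \<le> p \<and> p < y u}"
      define L where "L = {u\<in>W. y u \<le> p}"
      define R where "R = {u\<in>W. p < x u}"
      have finS: "finite S" "finite L" "finite R" using fin unfolding S_def L_def R_def by auto
      have "L \<subseteq> {u\<in>W. x u < p}" unfolding L_def using pos by fastforce
      hence "card L \<le> card {u\<in>W. x u < p}" using fin by (intro card_mono) auto
      hence cL: "card L \<le> 2 ^ k" using p cW by simp
      have cR: "card R \<le> 2 ^ k" using p cW unfolding R_def by simp
      have WU: "W = S \<union> (L \<union> R)"
      proof
        show "W \<subseteq> S \<union> (L \<union> R)"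
        proof
          fix u assume "u \<in> W"
          thus "u \<in> S \<union> (L \<union> R)" unfolding S_def L_def R_def by (cases "x u \<le> p"; cases "p < y u") auto
        qed
        show "S \<union> (L \<union> R) \<subseteq> W" unfolding S_def L_def R_def by blast
      qed
      have d1: "L \<inter> R = {}"
      proof -
        have "\<And>u. u \<in> W \<Longrightarrow> y u \<le> p \<Longrightarrow> p < x u \<Longrightarrow> False" using pos by fastforce
        thus ?thesis unfolding L_def R_def by blast
      qed
      have d2: "S \<inter> (L \<union> R) = {}" unfolding S_def L_def R_def by auto
      have cardW: "card W = card S + (card L + card R)"
      proof -
        have "card (L \<union> R) = card L + card R" using finS d1 by (intro card_Un_disjoint) auto
        moreover have "card (S \<union> (L \<union> R)) = card S + card (L \<union> R)"
          using finS d2 by (intro card_Un_disjoint) auto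
        ultimately show ?thesis using WU by simp
      qed
      show ?thesis
      proof (cases "card W \<le> (Suc k + 1) * card S")
        case True
        have "transR S x y" unfolding transR_def S_def by fastforce
        moreover have "S \<subseteq> W" unfolding S_def by auto
        ultimately show ?thesis using True by blast
      next
        case False
        have posL: "\<forall>u\<in>L. x u < y u" "\<forall>u\<in>R. x u < y u" using pos unfolding L_def R_def by auto
        obtain L' where L': "L' \<subseteq> L" "card L \<le> (k + 1) * card L'" "transR L' x y"
          using Suc.IH[rule_format, OF finS(2) cL posL(1)[rule_format]] by blast
        obtain R' where R': "R' \<subseteq> R" "card R \<le> (k + 1) * card R'" "transR R' x y"
          using Suc.IH[rule_format, OF finS(3) cR posL(2)[rule_format]] by blast
        have cross1: "x u < y v" if "u \<in> L" "v \<in> R" for u v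
        proof -
          have "x u < y u" "y u \<le> p" "p < x v" "x v < y v" using that pos unfolding L_def R_def by auto
          thus ?thesis by linarith
        qed
        have cross2: "\<not> x v < y u" if "u \<in> L" "v \<in> R" for u v
          using that unfolding L_def R_def by auto
        have tr: "transR (L' \<union> R') x y"
          unfolding transR_def
        proof (intro ballI impI)
          fix a b c assume a: "a \<in> L' \<union> R'" and b: "b \<in> L' \<union> R'" and c: "c \<in> L' \<union> R'"
            and ab: "x a < y b" and bc: "x b < y c"
          show "x a < y c"
          proof (cases "a \<in> L'")
            case aL: True
            show ?thesis
            proof (cases "c \<in> L'")
              case cL: True
              have "b \<in> L'" using b bc cross2 cL L'(1) R'(1) by blast
              thus ?thesis using L'(3) aL cL ab bc unfolding transR_def by blast
            next
              case False
              hence "c \<in> R'" using c by blast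
              thus ?thesis using cross1 aL L'(1) R'(1) by blast
            qed
          next
            case False
            hence aR: "a \<in> R'" using a by blast
            have bR: "b \<in> R'" using b ab cross2 aR L'(1) R'(1) by blast
            have cR: "c \<in> R'" using c bc cross2 bR L'(1) R'(1) by blast
            show ?thesis using R'(3) aR bR cR ab bc unfolding transR_def by blast
          qed
        qed
        have disj: "L' \<inter> R' = {}" using L'(1) R'(1) d1 by blast
        have fin': "finite L'" "finite R'" using L'(1) R'(1) finS finite_subset by auto
        have cU: "card (L' \<union> R') = card L' + card R'" using disj fin' by (intro card_Un_disjoint) auto
        have sub: "L' \<union> R' \<subseteq> W" using L'(1) R'(1) unfolding L_def R_def by auto
        have ineq: "card W \<le> (Suc k + 1) * (card L' + card R')"
        proof -
          define a where "a = card L' + card R'"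
          have i1: "card L + card R \<le> (k + 1) * a" using L'(2) R'(2) unfolding a_def by (simp add: algebra_simps)
          have i2: "(k + 2) * card S < card W" using False by simp
          have i3: "card W \<le> (k+1) * a + card S" using cardW i1 by linarith
          have "(k+2) * card W \<le> (k+2) * ((k+1) * a + card S)" using i3 by (rule mult_le_mono2)
          also have "\<dots> = (k+2) * ((k+1) * a) + (k+2) * card S" by (simp add: algebra_simps)
          finally have "(k+2) * card W < (k+2) * ((k+1) * a) + card W" using i2 by linarith
          hence "(k+1) * card W < (k+1) * ((k+2) * a)" by (simp add: algebra_simps)
          hence "card W < (k+2) * a" by (metis mult_less_cancel1)
          thus ?thesis unfolding a_def by simp
        qed
        show ?thesis using tr sub ineq cU by (intro exI[of _ "L' \<union> R'"]) auto
      qed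
    qed
  qed
qed


lemma coord_lemma:
  fixes x y :: "'a \<Rightarrow> real"
  assumes fin: "finite W" and cW: "card W \<le> 2 ^ k"
  shows "\<exists>W'\<subseteq>W. card W \<le> 2 * (k + 1) * card W' \<and> transR W' x y"
proof -
  define P where "P = {u\<in>W. x u < y u}"
  define N where "N = {u\<in>W. \<not> x u < y u}"
  have "card (P \<union> N) = card P + card N" using fin unfolding P_def N_def by (intro card_Un_disjoint) auto
  moreover have "P \<union> N = W" unfolding P_def N_def by auto
  ultimately have cPN: "card W = card P + card N" by simp
  show ?thesis
  proof (cases "card W \<le> 2 * card P")
    case True
    have cP: "card P \<le> 2 ^ k" using cPN cW by linarith
    have finP: "finite P" using fin unfolding P_def by auto
    have posP: "\<forall>u\<in>P. x u < y u" unfolding P_def by auto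
    obtain W' where W': "W' \<subseteq> P" "card P \<le> (k + 1) * card W'" "transR W' x y"
      using interval_lemma[of k x y, rule_format, OF finP cP posP[rule_format]] by blast
    have "card W \<le> 2 * ((k + 1) * card W')" using True W'(2) by linarith
    hence "card W \<le> 2 * (k + 1) * card W'" by (simp add: mult.assoc)
    moreover have "W' \<subseteq> W" using W'(1) unfolding P_def by auto
    ultimately show ?thesis using W'(3) by (intro exI[of _ W']) simp
  next
    case False
    have tr: "transR N x y" unfolding transR_def N_def
    proof (intro ballI impI)
      fix a b c assume "a \<in> {u \<in> W. \<not> x u < y u}" "b \<in> {u \<in> W. \<not> x u < y u}" "c \<in> {u \<in> W. \<not> x u < y u}"
        "x a < y b" "x b < y c"
      thus "x a < y c" by simp
    qed
    have "card W \<le> 2 * card N" using False cPN by linarith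
    also have "\<dots> \<le> 2 * (k + 1) * card N" by simp
    finally have "card W \<le> 2 * (k + 1) * card N" .
    moreover have "N \<subseteq> W" unfolding N_def by auto
    ultimately show ?thesis using tr by (intro exI[of _ N]) simp
  qed
qed

lemma coords_lemma:
  fixes V :: "(real list \<times> real list) set"
  assumes fin: "finite V" and cV: "card V \<le> 2 ^ k"
  shows "\<exists>W\<subseteq>V. card V \<le> (2 * (k + 1)) ^ j * card W \<and>
           (\<forall>i<j. transR W (\<lambda>u. fst u ! i) (\<lambda>u. snd u ! i))"
proof (induction j)
  case 0
  show ?case by (intro exI[of _ V]) auto
next
  case (Suc j)
  then obtain W where W: "W \<subseteq> V" "card V \<le> (2 * (k + 1)) ^ j * card W"
    "\<forall>i<j. transR W (\<lambda>u. fst u ! i) (\<lambda>u. snd u ! i)" by blast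
  have finW: "finite W" using W(1) fin finite_subset by auto
  have "card W \<le> card V" using W(1) fin by (rule card_mono[rotated])
  hence "card W \<le> 2 ^ k" using cV by linarith
  then obtain W' where W': "W' \<subseteq> W" "card W \<le> 2 * (k + 1) * card W'"
    "transR W' (\<lambda>u. fst u ! j) (\<lambda>u. snd u ! j)"
    using coord_lemma[OF finW] by blast
  have "card V \<le> (2 * (k + 1)) ^ j * (2 * (k + 1) * card W')"
  proof -
    have "(2 * (k + 1)) ^ j * card W \<le> (2 * (k + 1)) ^ j * (2 * (k + 1) * card W')"
      using W'(2) by (rule mult_le_mono2)
    thus ?thesis using W(2) by linarith
  qed
  hence c: "card V \<le> (2 * (k + 1)) ^ Suc j * card W'" by (simp add: algebra_simps)
  have "\<forall>i<Suc j. transR W' (\<lambda>u. fst u ! i) (\<lambda>u. snd u ! i)"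
  proof (intro allI impI)
    fix i assume "i < Suc j"
    show "transR W' (\<lambda>u. fst u ! i) (\<lambda>u. snd u ! i)"
    proof (cases "i = j")
      case True thus ?thesis using W'(3) by simp
    next
      case False
      hence "i < j" using \<open>i < Suc j\<close> by simp
      thus ?thesis using W(3) W'(1) transR_mono by blast
    qed
  qed
  thus ?case using c W(1) W'(1) by (intro exI[of _ W']) auto
qed

lemma mirsky:
  fixes D :: "'a \<Rightarrow> 'a \<Rightarrow> bool"
  shows "finite W \<Longrightarrow> (\<forall>a\<in>W. \<not> D a a) \<Longrightarrow> (\<forall>a\<in>W. \<forall>b\<in>W. \<forall>c\<in>W. D a b \<longrightarrow> D b c \<longrightarrow> D a c) \<Longrightarrow>
    \<exists>C\<subseteq>W. \<exists>A\<subseteq>W. (\<forall>u\<in>C. \<forall>v\<in>C. u \<noteq> v \<longrightarrow> D u v \<or> D v u) \<and> (\<forall>u\<in>A. \<forall>v\<in>A. \<not> D u v)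
       \<and> card W \<le> card C * card A"
proof (induction "card W" arbitrary: W rule: less_induct)
  case less
  note fin = less.prems(1) and irr = less.prems(2) and tr = less.prems(3)
  show ?case
  proof (cases "W = {}")
    case True thus ?thesis by auto
  next
    case False
    define f where "f u = card {z\<in>W. D z u}" for u
    have fmono: "f a < f b" if "a \<in> W" "b \<in> W" "D a b" for a b
    proof -
      have "{z\<in>W. D z a} \<subset> {z\<in>W. D z b}"
      proof
        show "{z\<in>W. D z a} \<subseteq> {z\<in>W. D z b}" using tr that by blast
        show "{z\<in>W. D z a} \<noteq> {z\<in>W. D z b}" using that irr by blast
      qed
      thus ?thesis unfolding f_def using fin by (intro psubset_card_mono) auto
    qed
    define M where "M = {m\<in>W. \<forall>w\<in>W. \<not> D m w}"
    have above: "\<exists>m\<in>M. D c m" if c: "c \<in> W" "c \<notin> M" for c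
    proof -
      define U where "U = {v\<in>W. D c v}"
      have Une: "U \<noteq> {}" using c unfolding U_def M_def by auto
      have finU: "finite U" using fin unfolding U_def by auto
      obtain v where v: "v \<in> U" "\<forall>z\<in>U. f z \<le> f v" using ex_max_fun[OF finU Une, of f] by blast
      have "v \<in> M"
      proof -
        have "\<not> D v w" if "w \<in> W" for w
        proof
          assume "D v w"
          moreover have "D c v" "v \<in> W" using v(1) unfolding U_def by auto
          ultimately have "D c w" using tr that c(1) by blast
          hence "w \<in> U" using that unfolding U_def by simp
          hence "f w \<le> f v" using v(2) by blast
          moreover have "f v < f w" using fmono[OF _ that \<open>D v w\<close>] v(1) unfolding U_def by simp
          ultimately show False by linarith
        qed
        thus ?thesis using v(1) unfolding M_def U_def by blast
      qed
      thus ?thesis using v(1) unfolding U_def by blast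
    qed
    have Mne: "M \<noteq> {}"
    proof -
      obtain c where "c \<in> W" using False by blast
      thus ?thesis using above by (cases "c \<in> M") auto
    qed
    have MA: "\<forall>u\<in>M. \<forall>v\<in>M. \<not> D u v" unfolding M_def by blast
    define W' where "W' = W - M"
    have finM: "finite M" using fin unfolding M_def by auto
    have cW: "card W = card W' + card M"
    proof -
      have "M \<subseteq> W" unfolding M_def by auto
      hence "card (W - M) = card W - card M" using finM by (rule card_Diff_subset[rotated])
      moreover have "card M \<le> card W" using \<open>M \<subseteq> W\<close> fin by (rule card_mono[rotated])
      ultimately show ?thesis unfolding W'_def by simp
    qed
    have "card M > 0" using Mne finM by auto
    hence lt: "card W' < card W" using cW by linarith
    have "finite W'" using fin unfolding W'_def by auto
    moreover have "\<forall>a\<in>W'. \<not> D a a" using irr unfolding W'_def by auto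
    moreover have "\<forall>a\<in>W'. \<forall>b\<in>W'. \<forall>c\<in>W'. D a b \<longrightarrow> D b c \<longrightarrow> D a c" using tr unfolding W'_def by auto
    ultimately have "\<exists>C\<subseteq>W'. \<exists>A\<subseteq>W'. (\<forall>u\<in>C. \<forall>v\<in>C. u \<noteq> v \<longrightarrow> D u v \<or> D v u) \<and> (\<forall>u\<in>A. \<forall>v\<in>A. \<not> D u v)
       \<and> card W' \<le> card C * card A" by (rule less.hyps[OF lt])
    then obtain C' A' where CA': "C' \<subseteq> W'" "A' \<subseteq> W'" "\<forall>u\<in>C'. \<forall>v\<in>C'. u \<noteq> v \<longrightarrow> D u v \<or> D v u"
      "\<forall>u\<in>A'. \<forall>v\<in>A'. \<not> D u v" "card W' \<le> card C' * card A'"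
      by blast
    show ?thesis
    proof (cases "C' = {}")
      case True
      hence "card W' = 0" using CA'(5) by simp
      obtain m where m: "m \<in> M" using Mne by blast
      have "card W \<le> card {m} * card M" using cW \<open>card W' = 0\<close> by simp
      moreover have "{m} \<subseteq> W" "M \<subseteq> W" using m unfolding M_def by auto
      moreover have "\<forall>u\<in>{m}. \<forall>v\<in>{m}. u \<noteq> v \<longrightarrow> D u v \<or> D v u" by simp
      ultimately show ?thesis using MA by (intro exI[of _ "{m}"] conjI exI[of _ M]) simp_all
    next
      case False
      have finC': "finite C'" using CA'(1) \<open>finite W'\<close> finite_subset by auto
      obtain c where c: "c \<in> C'" "\<forall>z\<in>C'. f z \<le> f c" using ex_max_fun[OF finC' False] by blast
      have cW': "c \<in> W" "c \<notin> M" using c(1) CA'(1) unfolding W'_def by auto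
      have below: "D z c" if "z \<in> C'" "z \<noteq> c" for z
      proof -
        have "D z c \<or> D c z" using CA'(3) that c(1) by blast
        moreover have "\<not> D c z"
        proof
          assume "D c z"
          hence "f c < f z" using fmono cW'(1) that CA'(1) unfolding W'_def by blast
          thus False using c(2) that by force
        qed
        ultimately show ?thesis by blast
      qed
      obtain v where v: "v \<in> M" "D c v" using above[OF cW'] by blast
      have vW: "v \<in> W" using v unfolding M_def by auto
      define C where "C = insert v C'"
      have vC': "v \<notin> C'" using v(1) CA'(1) unfolding W'_def by auto
      have cardC: "card C = card C' + 1" unfolding C_def using vC' finC' by simp
      have chain: "\<forall>u\<in>C. \<forall>w\<in>C. u \<noteq> w \<longrightarrow> D u w \<or> D w u"
      proof -
        have "D z v" if "z \<in> C'" for z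
        proof (cases "z = c")
          case True thus ?thesis using v by simp
        next
          case False
          hence "D z c" using below that by blast
          moreover have "z \<in> W" using that CA'(1) unfolding W'_def by auto
          ultimately show ?thesis using tr cW'(1) vW v(2) by blast
        qed
        thus ?thesis using CA'(3) unfolding C_def by blast
      qed
      have CW: "C \<subseteq> W" using CA'(1) vW unfolding C_def W'_def by auto
      show ?thesis
      proof (cases "card M \<le> card A'")
        case True
        have "card W \<le> card C' * card A' + card A'" using cW CA'(5) True by linarith
        also have "\<dots> = card C * card A'" using cardC by (simp add: algebra_simps)
        moreover have "A' \<subseteq> W" using CA'(2) unfolding W'_def by auto
        ultimately show ?thesis using chain CW CA'(4) by (intro exI[of _ C] conjI exI[of _ A']) simp_all
      next
        case False
        have "card C' * card A' \<le> card C' * card M" using False by simp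
        hence "card W \<le> card C' * card M + card M" using cW CA'(5) by linarith
        also have "\<dots> = card C * card M" using cardC by (simp add: algebra_simps)
        moreover have "M \<subseteq> W" unfolding M_def by auto
        ultimately show ?thesis using chain CW MA by (intro exI[of _ C] conjI exI[of _ M]) simp_all
      qed
    qed
  qed
qed



lemma trans_clique_indep:
  fixes D :: "'a \<Rightarrow> 'a \<Rightarrow> bool"
  assumes fin: "finite W" and tr: "\<forall>a\<in>W. \<forall>b\<in>W. \<forall>c\<in>W. D a b \<longrightarrow> D b c \<longrightarrow> D a c"
  shows "\<exists>S\<subseteq>W. ((\<forall>u\<in>S. \<forall>v\<in>S. u \<noteq> v \<longrightarrow> D u v \<or> D v u) \<or> (\<forall>u\<in>S. \<forall>v\<in>S. u \<noteq> v \<longrightarrow> \<not> D u v))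
     \<and> card W \<le> card S ^ 2"
proof -
  obtain r :: "'a \<Rightarrow> nat" and n where r: "r ` W = {i. i < n}" "inj_on r W"
    using finite_imp_inj_to_nat_seg[OF fin] by blast
  define D' where "D' u v \<longleftrightarrow> D u v \<and> (\<not> D v u \<or> r u < r v)" for u v
  have irr: "\<forall>a\<in>W. \<not> D' a a" unfolding D'_def by auto
  have tr': "\<forall>a\<in>W. \<forall>b\<in>W. \<forall>c\<in>W. D' a b \<longrightarrow> D' b c \<longrightarrow> D' a c"
  proof (intro ballI impI)
    fix a b c assume abc: "a \<in> W" "b \<in> W" "c \<in> W" and ab: "D' a b" and bc: "D' b c"
    have Dab: "D a b" and Dbc: "D b c" using ab bc unfolding D'_def by auto
    have Dac: "D a c" using tr abc Dab Dbc by blast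
    show "D' a c"
    proof (cases "D c a")
      case False thus ?thesis using Dac unfolding D'_def by simp
    next
      case True
      have "D c b" using tr abc True Dab by blast
      hence "r b < r c" using bc unfolding D'_def by simp
      have "D b a" using tr abc Dbc True by blast
      hence "r a < r b" using ab unfolding D'_def by simp
      thus ?thesis using Dac \<open>r b < r c\<close> unfolding D'_def by simp
    qed
  qed
  obtain C A where CA: "C \<subseteq> W" "A \<subseteq> W" "\<forall>u\<in>C. \<forall>v\<in>C. u \<noteq> v \<longrightarrow> D' u v \<or> D' v u"
      "\<forall>u\<in>A. \<forall>v\<in>A. \<not> D' u v" "card W \<le> card C * card A"
    using mirsky[OF fin irr tr'] by blast
  have cl: "\<forall>u\<in>C. \<forall>v\<in>C. u \<noteq> v \<longrightarrow> D u v \<or> D v u" using CA(3) unfolding D'_def by blast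
  have ind: "\<forall>u\<in>A. \<forall>v\<in>A. u \<noteq> v \<longrightarrow> \<not> D u v"
  proof (intro ballI impI)
    fix u v assume uv: "u \<in> A" "v \<in> A" "u \<noteq> v"
    show "\<not> D u v"
    proof
      assume Duv: "D u v"
      have "r u \<noteq> r v" using r(2) uv CA(2) by (meson inj_on_contraD subsetD)
      hence "r u < r v \<or> r v < r u" by linarith
      thus False using CA(4) uv Duv unfolding D'_def by blast
    qed
  qed
  show ?thesis
  proof (cases "card A \<le> card C")
    case True
    have "card C * card A \<le> card C * card C" using True by (rule mult_le_mono2)
    hence "card W \<le> card C ^ 2" using CA(5) unfolding power2_eq_square by linarith
    thus ?thesis using cl CA(1) by blast
  next
    case False
    have "card C * card A \<le> card A * card A" using False by (intro mult_le_mono1) linarith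
    hence "card W \<le> card A ^ 2" using CA(5) unfolding power2_eq_square by linarith
    thus ?thesis using ind CA(2) by blast
  qed
qed

lemma fact_pow_bound: "(k + 1) ^ d * fact k \<le> (fact (k + d) :: nat)"
proof (induction d)
  case 0 show ?case by simp
next
  case (Suc d)
  have "(k + 1) ^ Suc d * fact k = (k + 1) * ((k + 1) ^ d * fact k)" by (simp only: power_Suc mult.assoc)
  also have "\<dots> \<le> (k + d + 1) * fact (k + d)" using Suc.IH by (intro mult_le_mono) auto
  also have "\<dots> = fact (k + Suc d)" by (simp add: algebra_simps)
  finally show ?case .
qed

lemma poly_exp_bound: "(k + 1) ^ d \<le> fact d * 2 ^ d * (2 ^ k :: nat)"
proof -
  have e: "fact d * fact k * ((k + d) choose d) = (fact (k + d) :: nat)"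
    using binomial_fact_lemma[of d "k + d"] by simp
  have "(k + 1) ^ d * fact k \<le> fact d * ((k + d) choose d) * fact k"
    using fact_pow_bound[of k d] e by (simp add: algebra_simps)
  hence "(k + 1) ^ d \<le> fact d * ((k + d) choose d)" by simp
  also have "\<dots> \<le> fact d * 2 ^ (k + d)" using binomial_le_pow2[of "k + d" d] by simp
  also have "\<dots> = fact d * 2 ^ d * 2 ^ k" by (simp add: power_add)
  finally show ?thesis .
qed



lemma main_bound:
  fixes V :: "(real list \<times> real list) set"
  assumes fin: "finite V"
  shows "\<exists>S\<subseteq>V. (qc_clique t S \<or> qc_indep t S) \<and>
           card V \<le> 2 * (2 ^ (2 * t) * (fact (2 * t) * 2 ^ (2 * t))) * card S ^ 4"
proof (cases "V = {}")
  case True thus ?thesis unfolding qc_clique_def by (intro exI[of _ "{}"]) auto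
next
  case False
  define n where "n = card V"
  have npos: "n > 0" using False fin unfolding n_def by auto
  define K :: nat where "K = 2 ^ (2 * t) * (fact (2 * t) * 2 ^ (2 * t))"
  have ex: "\<exists>k. n \<le> 2 ^ k" using less_exp[of n] by (intro exI[of _ n]) simp
  define k where "k = (LEAST k. n \<le> 2 ^ k)"
  have nk: "n \<le> 2 ^ k" unfolding k_def using LeastI_ex[OF ex] .
  have kn: "2 ^ k \<le> 2 * n"
  proof (cases k)
    case 0 thus ?thesis using npos by simp
  next
    case (Suc k')
    have "\<not> n \<le> 2 ^ k'" unfolding k_def using Suc k_def not_less_Least[of k' "\<lambda>k. n \<le> 2 ^ k"] by simp
    thus ?thesis using Suc by simp
  qed
  obtain W where W: "W \<subseteq> V" "n \<le> (2 * (k + 1)) ^ t * card W"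
    "\<forall>i<t. transR W (\<lambda>u. fst u ! i) (\<lambda>u. snd u ! i)"
    using coords_lemma[OF fin nk[unfolded n_def], of t] unfolding n_def by blast
  define D where "D u v \<longleftrightarrow> vec_prec t (fst u) (snd v)" for u v :: "real list \<times> real list"
  have trD: "\<forall>a\<in>W. \<forall>b\<in>W. \<forall>c\<in>W. D a b \<longrightarrow> D b c \<longrightarrow> D a c"
    unfolding D_def vec_prec_def
  proof (intro ballI impI allI)
    fix a b c i assume abc: "a \<in> W" "b \<in> W" "c \<in> W"
      and ab: "\<forall>i<t. fst a ! i < snd b ! i" and bc: "\<forall>i<t. fst b ! i < snd c ! i" and i: "i < t"
    have "transR W (\<lambda>u. fst u ! i) (\<lambda>u. snd u ! i)" using W(3) i by blast
    thus "fst a ! i < snd c ! i" using abc ab bc i unfolding transR_def by blast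
  qed
  have finW: "finite W" using W(1) fin finite_subset by auto
  obtain S where S: "S \<subseteq> W" "(\<forall>u\<in>S. \<forall>v\<in>S. u \<noteq> v \<longrightarrow> D u v \<or> D v u) \<or> (\<forall>u\<in>S. \<forall>v\<in>S. u \<noteq> v \<longrightarrow> \<not> D u v)"
    "card W \<le> card S ^ 2"
    using trans_clique_indep[OF finW trD] by blast
  have cq: "qc_clique t S \<or> qc_indep t S"
  proof (cases "\<forall>u\<in>S. \<forall>v\<in>S. u \<noteq> v \<longrightarrow> D u v \<or> D v u")
    case True
    hence "qc_clique t S" unfolding qc_clique_def qc_adj_def D_def by simp
    thus ?thesis ..
  next
    case False
    have nd: "\<forall>u\<in>S. \<forall>v\<in>S. u \<noteq> v \<longrightarrow> \<not> D u v"
      using S(2) False by (elim disjE) simp_all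
    have "qc_indep t S" unfolding qc_indep_def
    proof (intro ballI)
      fix u v assume uv: "u \<in> S" "v \<in> S"
      show "\<not> qc_adj t u v"
      proof (cases "u = v")
        case True thus ?thesis unfolding qc_adj_def by simp
      next
        case False
        hence "\<not> D u v" "\<not> D v u" using nd uv by auto
        thus ?thesis unfolding qc_adj_def D_def by simp
      qed
    qed
    thus ?thesis ..
  qed
  define Q where "Q = (2 * (k + 1)) ^ t"
  define s where "s = card S"
  have n1: "n \<le> Q * s ^ 2"
  proof -
    have "Q * card W \<le> Q * s ^ 2" using S(3) unfolding s_def by (rule mult_le_mono2)
    moreover have "n \<le> Q * card W" using W(2) unfolding Q_def by simp
    ultimately show ?thesis by (rule le_trans[rotated])
  qed
  have Q2: "Q ^ 2 \<le> K * 2 ^ k"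
  proof -
    have "Q ^ 2 = (2 * (k + 1)) ^ (t * 2)" unfolding Q_def by (rule power_mult[symmetric])
    also have "\<dots> = (2 * (k + 1)) ^ (2 * t)" by (simp only: mult.commute)
    also have "\<dots> = 2 ^ (2 * t) * (k + 1) ^ (2 * t)" by (rule power_mult_distrib)
    finally have "Q ^ 2 = 2 ^ (2 * t) * (k + 1) ^ (2 * t)" .
    also have "\<dots> \<le> 2 ^ (2 * t) * (fact (2 * t) * 2 ^ (2 * t) * 2 ^ k)"
      using poly_exp_bound[of k "2 * t"] by (rule mult_le_mono2)
    also have "\<dots> = K * 2 ^ k" unfolding K_def by (simp add: algebra_simps)
    finally show ?thesis .
  qed
  have "n * n \<le> (Q * s ^ 2) * (Q * s ^ 2)" by (rule mult_le_mono[OF n1 n1])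
  also have "\<dots> = Q ^ 2 * (s ^ 2) ^ 2" by (simp only: power2_eq_square ac_simps)
  also have "\<dots> \<le> (K * 2 ^ k) * (s ^ 2) ^ 2" using Q2 by (rule mult_le_mono1)
  also have "\<dots> \<le> (K * (2 * n)) * (s ^ 2) ^ 2" using kn by (intro mult_le_mono1 mult_le_mono2)
  also have "\<dots> = n * (2 * K * (s ^ 2) ^ 2)" by (simp only: ac_simps)
  finally have "n * n \<le> n * (2 * K * (s ^ 2) ^ 2)" .
  hence "n \<le> 2 * K * (s ^ 2) ^ 2" using npos by simp
  moreover have "(s ^ 2) ^ 2 = s ^ 4" by (simp flip: power_mult)
  ultimately have "n \<le> 2 * K * s ^ 4" by simp
  thus ?thesis using cq S(1) W(1) unfolding n_def s_def K_def by (intro exI[of _ S]) auto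
qed



theorem theorem4p1:
  shows "\<exists>c::real. c > 0 \<and> (\<forall>t::nat. t > 0 \<longrightarrow> (\<exists>\<alpha>::real. \<alpha> > 0 \<and>
     (\<forall>V. qc_graph t V \<longrightarrow>
        (\<exists>S\<subseteq>V. (qc_clique t S \<or> qc_indep t S) \<and>
                 real (card S) \<ge> \<alpha> * real (card V) powr c))))"
proof (rule exI[of _ "1/4"], intro conjI allI impI)
  show "(0::real) < 1/4" by simp
  fix t :: nat assume "t > 0"
  define M :: nat where "M = 2 * (2 ^ (2 * t) * (fact (2 * t) * 2 ^ (2 * t)))"
  have M1: "M \<ge> 1" unfolding M_def by simp
  show "\<exists>\<alpha>::real. \<alpha> > 0 \<and> (\<forall>V. qc_graph t V \<longrightarrow>
        (\<exists>S\<subseteq>V. (qc_clique t S \<or> qc_indep t S) \<and> real (card S) \<ge> \<alpha> * real (card V) powr (1/4)))"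
  proof (rule exI[of _ "1 / real M"], intro conjI allI impI)
    show "0 < 1 / real M" using M1 by simp
    fix V assume "qc_graph t V"
    hence fin: "finite V" unfolding qc_graph_def by simp
    obtain S where S: "S \<subseteq> V" "qc_clique t S \<or> qc_indep t S" "card V \<le> M * card S ^ 4"
      using main_bound[OF fin, of t] unfolding M_def by blast
    define n where "n = real (card V)"
    define s where "s = real (card S)"
    have n0: "n \<ge> 0" unfolding n_def by simp
    have s0: "s \<ge> 0" unfolding s_def by simp
    have ns: "n \<le> real M * s ^ 4" using S(3) unfolding n_def s_def
      by (metis of_nat_le_iff of_nat_mult of_nat_power)
    have key: "n powr (1/4) \<le> real M * s"
    proof (cases "n = 0")
      case True thus ?thesis using s0 by simp
    next
      case False
      have p4: "(n powr (1/4)) ^ 4 = n"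
        using False n0 by (simp add: powr_power)
      show ?thesis
      proof (rule ccontr)
        assume "\<not> ?thesis"
        hence lt: "real M * s < n powr (1/4)" by simp
        have "(real M * s) ^ 4 < (n powr (1/4)) ^ 4"
          using lt M1 s0 by (intro power_strict_mono) auto
        hence "(real M * s) ^ 4 < n" using p4 by simp
        moreover have "real M * s ^ 4 \<le> (real M * s) ^ 4"
        proof -
          have "real M \<le> real M ^ 4" using power_increasing[of 1 4 "real M"] M1 by simp
          hence "real M * s ^ 4 \<le> real M ^ 4 * s ^ 4" using s0 by (intro mult_right_mono) auto
          thus ?thesis by (simp add: power_mult_distrib)
        qed
        ultimately show False using ns by linarith
      qed
    qed
    have "1 / real M * n powr (1/4) \<le> s"
      using key M1 by (simp add: divide_simps mult.commute)
    thus "\<exists>S\<subseteq>V. (qc_clique t S \<or> qc_indep t S) \<and> real (card S) \<ge> 1 / real M * real (card V) powr (1/4)"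
      using S(1,2) unfolding n_def s_def by blast
  qed
qed

end
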